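(* The edge generating series of the Fibonacci posets is $$\sum_{n\ge0}\ell(\mathcal{F}_n)x^n=\frac{x^2}{(1-x-x^2)^2},$$ and for every $n\ge0$, $\ell(\mathcal{F}_n)=\frac{nL_n-F_n}{5}$. Moreover $\ell(\mathcal{F}_n)\sim\frac n5\varphi^n$ and $i(\mathcal{F}_n)\sim\frac{n}{\sqrt5\,\varphi}$, where $\varphi=(1+\sqrt5)/2$.
   Context: Steps: $U=(1,1)$, $D=(1,-1)$, $H=(1,0)$. A Fibonacci path of length $n$ is a lattice path from $(0,0)$ to $(n,0)$ with steps $U,D,H$ that stays in the strip $0\le y\le1$ and whose $H$ steps all lie on the $x$-axis. $\mathcal{F}_n$ is the set of Fibonacci paths of length $n$, partially ordered by $\gamma_1\le\gamma_2$ iff $\gamma_1$ lies weakly below $\gamma_2$. $\ell(P)$ is the number of edges (covering pairs) of the Hasse diagram of a finite poset $P$ and $i(P)=\ell(P)/|P|$. $F_n$ are the Fibonacci numbers ($F_0=0$, $F_1=1$, $F_{n+2}=F_{n+1}+F_n$) and $L_n$ the Lucas numbers ($L_0=2$, $L_1=1$, $L_{n+2}=L_{n+1}+L_n$). $a_n\sim b_n$ means $a_n/b_n\to1$. *)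

theory Defs
  imports "HOL-Analysis.Analysis" "HOL-Computational_Algebra.Formal_Power_Series"
    "HOL-Library.Landau_Symbols" "HOL-Number_Theory.Fib"
begin

text \<open>Steps U = (1,1), D = (1,-1), H = (1,0) of a lattice path.\<close>
datatype step = U | D | H

fun step_dy :: "step \<Rightarrow> int" where
  "step_dy U = 1" | "step_dy D = -1" | "step_dy H = 0"

definition ht :: "step list \<Rightarrow> nat \<Rightarrow> int" where
  "ht p k = sum_list (map step_dy (take k p))"

definition fib_path :: "nat \<Rightarrow> step list \<Rightarrow> bool" where
  "fib_path n p \<longleftrightarrow> length p = n \<and> ht p n = 0
     \<and> (\<forall>k\<le>n. 0 \<le> ht p k \<and> ht p k \<le> 1)
     \<and> (\<forall>k<n. p ! k = H \<longrightarrow> ht p k = 0)"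

definition FibPaths :: "nat \<Rightarrow> step list set" where
  "FibPaths n = {p. fib_path n p}"

text \<open>p lies weakly below q (paths are piecewise linear between lattice points,
  so it suffices to compare heights at integer abscissae).\<close>
definition below :: "step list \<Rightarrow> step list \<Rightarrow> bool" where
  "below p q \<longleftrightarrow> (\<forall>k\<le>length p. ht p k \<le> ht q k)"

definition hasse_edges :: "'a set \<Rightarrow> ('a \<Rightarrow> 'a \<Rightarrow> bool) \<Rightarrow> nat" where
  "hasse_edges P le = card {(a, b). a \<in> P \<and> b \<in> P \<and> le a b \<and> a \<noteq> b \<and>
      \<not> (\<exists>c\<in>P. le a c \<and> le c b \<and> c \<noteq> a \<and> c \<noteq> b)}"

definition ell :: "nat \<Rightarrow> nat" where
  "ell n = hasse_edges (FibPaths n) below"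

definition iota :: "nat \<Rightarrow> real" where
  "iota n = real (ell n) / real (card (FibPaths n))"

fun lucas :: "nat \<Rightarrow> nat" where
  "lucas 0 = 2" | "lucas (Suc 0) = 1" | "lucas (Suc (Suc n)) = lucas (Suc n) + lucas n"

definition phi :: real where "phi = (1 + sqrt 5) / 2"

end

theory Submission
  imports Defs
begin

lemma ht_0 [simp]: "ht p 0 = 0"
  by (simp add: ht_def)

lemma ht_Cons_Suc [simp]: "ht (s # p) (Suc k) = step_dy s + ht p k"
  by (simp add: ht_def)

lemma all_le_Suc: "(\<forall>k\<le>Suc n. P k) \<longleftrightarrow> P 0 \<and> (\<forall>k\<le>n. P (Suc k))"
  by (metis Suc_le_mono le0 not0_implies_Suc)

lemma all_less_Suc: "(\<forall>k<Suc n. P k) \<longleftrightarrow> P 0 \<and> (\<forall>k<n. P (Suc k))"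
  by (metis Suc_less_eq zero_less_Suc not0_implies_Suc)

lemma fib_path_0: "fib_path 0 p \<longleftrightarrow> p = []"
  by (auto simp: fib_path_def)

lemma fib_path_H: "fib_path (Suc n) (H # p) \<longleftrightarrow> fib_path n p"
  unfolding fib_path_def by (simp add: all_le_Suc all_less_Suc)

lemma fib_path_UD: "fib_path (Suc (Suc n)) (U # D # p) \<longleftrightarrow> fib_path n p"
  unfolding fib_path_def by (simp add: all_le_Suc all_less_Suc)

lemma fib_path_D: "\<not> fib_path (Suc n) (D # p)"
  unfolding fib_path_def by (auto simp: all_le_Suc)

lemma fib_path_UU: "\<not> fib_path (Suc (Suc n)) (U # U # p)"
  unfolding fib_path_def by (auto simp: all_le_Suc)

lemma fib_path_UH: "\<not> fib_path (Suc (Suc n)) (U # H # p)"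
  unfolding fib_path_def by (auto simp: all_less_Suc)

lemma fib_path_1: "fib_path (Suc 0) x \<longleftrightarrow> x = [H]"
proof
  assume a: "fib_path (Suc 0) x"
  then obtain s where x: "x = [s]" unfolding fib_path_def by (cases x) auto
  show "x = [H]" using a unfolding x fib_path_def by (cases s) auto
qed (simp add: fib_path_H fib_path_0)

lemma fib_path_SS: "fib_path (Suc (Suc n)) x \<longleftrightarrow>
   (\<exists>p. x = H # p \<and> fib_path (Suc n) p) \<or> (\<exists>p. x = U # D # p \<and> fib_path n p)"
proof
  assume a: "fib_path (Suc (Suc n)) x"
  then obtain s y where x: "x = s # y" unfolding fib_path_def by (cases x) auto
  show "(\<exists>p. x = H # p \<and> fib_path (Suc n) p) \<or> (\<exists>p. x = U # D # p \<and> fib_path n p)"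
  proof (cases s)
    case U
    from a obtain t z where y: "y = t # z" unfolding fib_path_def x by (cases y) auto
    show ?thesis using a fib_path_UU fib_path_UH fib_path_UD unfolding x y U by (cases t) auto
  next
    case D then show ?thesis using a fib_path_D x by auto
  next
    case H then show ?thesis using a fib_path_H x by auto
  qed
qed (auto simp: fib_path_H fib_path_UD)

lemma FibPaths_0: "FibPaths 0 = {[]}"
  by (auto simp: FibPaths_def fib_path_0)

lemma FibPaths_1: "FibPaths (Suc 0) = {[H]}"
  by (auto simp: FibPaths_def fib_path_1)

lemma FibPaths_SS: "FibPaths (Suc (Suc n)) = (Cons H) ` FibPaths (Suc n) \<union> (\<lambda>p. U # D # p) ` FibPaths n"
  by (auto simp: FibPaths_def fib_path_SS)

lemma H_in_FP: "p \<in> FibPaths n \<Longrightarrow> H # p \<in> FibPaths (Suc n)"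
  by (simp add: FibPaths_def fib_path_H)

lemma UD_in_FP: "p \<in> FibPaths n \<Longrightarrow> U # D # p \<in> FibPaths (Suc (Suc n))"
  by (simp add: FibPaths_def fib_path_UD)

lemma FibPaths_Suc_cases:
  assumes "p \<in> FibPaths (Suc n)"
  shows "(\<exists>q\<in>FibPaths n. p = H # q) \<or> (\<exists>m q. n = Suc m \<and> q \<in> FibPaths m \<and> p = U # D # q)"
proof (cases n)
  case 0 then show ?thesis using assms by (auto simp: FibPaths_0 FibPaths_1)
next
  case (Suc m) then show ?thesis using assms by (auto simp: FibPaths_SS)
qed

lemma finite_FibPaths: "finite (FibPaths n) \<and> finite (FibPaths (Suc n))"
  by (induction n) (auto simp: FibPaths_0 FibPaths_1 FibPaths_SS)

lemma card_FibPaths: "card (FibPaths n) = fib (Suc n) \<and> card (FibPaths (Suc n)) = fib (Suc (Suc n))"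
proof (induction n)
  case 0 then show ?case by (simp add: FibPaths_0 FibPaths_1)
next
  case (Suc n)
  have "card (FibPaths (Suc (Suc n))) = card (FibPaths (Suc n)) + card (FibPaths n)"
    unfolding FibPaths_SS
    by (subst card_Un_disjoint) (auto simp: finite_FibPaths card_image inj_on_def)
  then show ?case using Suc by simp
qed

lemma below_Cons: "below (s # p) (t # q) \<longleftrightarrow> (\<forall>k\<le>length p. step_dy s + ht p k \<le> step_dy t + ht q k)"
  unfolding below_def by (simp add: all_le_Suc)

lemma below_same: "below (s # p) (s # q) \<longleftrightarrow> below p q"
  unfolding below_Cons by (simp add: below_def)

lemma below_UD_same: "below (U # D # p) (U # D # q) \<longleftrightarrow> below p q"
  by (simp add: below_same)

lemma below_U_H: "\<not> below (U # p) (H # q)"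
  by (auto simp: below_Cons)

lemma below_HU_UD: "\<not> below (H # U # p) (U # D # q)"
  unfolding below_Cons by (auto intro!: exI[of _ 1])

lemma below_HH_UD: "below (H # H # p) (U # D # q) \<longleftrightarrow> below p q"
  unfolding below_Cons by (simp add: all_le_Suc below_def)

lemma below_refl: "below p p"
  by (simp add: below_def)

lemma dy_inj: "step_dy s = step_dy t \<Longrightarrow> s = t"
  by (cases s; cases t) auto

lemma below_antisym: "length p = length q \<Longrightarrow> below p q \<Longrightarrow> below q p \<Longrightarrow> p = q"
proof (induction p arbitrary: q)
  case Nil then show ?case by simp
next
  case (Cons s p)
  then obtain t q' where q: "q = t # q'" by (cases q) auto
  have "step_dy s \<le> step_dy t" "step_dy t \<le> step_dy s"
    using Cons.prems unfolding q below_Cons by (auto dest: spec[of _ 0])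
  then have st: "s = t" using dy_inj by auto
  show ?case using Cons q st by (simp add: below_same)
qed


definition Cv :: "nat \<Rightarrow> (step list \<times> step list) set" where
  "Cv n = {(a, b). a \<in> FibPaths n \<and> b \<in> FibPaths n \<and> below a b \<and> a \<noteq> b \<and>
      \<not> (\<exists>c\<in>FibPaths n. below a c \<and> below c b \<and> c \<noteq> a \<and> c \<noteq> b)}"

lemma ell_Cv: "ell n = card (Cv n)"
  by (simp add: ell_def hasse_edges_def Cv_def)

lemma len_FP: "p \<in> FibPaths n \<Longrightarrow> length p = n"
  by (simp add: FibPaths_def fib_path_def)

lemma Cv_iff: "(a, b) \<in> Cv n \<longleftrightarrow> a \<in> FibPaths n \<and> b \<in> FibPaths n \<and> below a b \<and> a \<noteq> b \<and>
   (\<forall>c\<in>FibPaths n. below a c \<longrightarrow> below c b \<longrightarrow> c \<noteq> a \<longrightarrow> c \<noteq> b \<longrightarrow> False)"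
  by (auto simp: Cv_def)

lemma Cv_0: "Cv 0 = {}"
  by (auto simp: Cv_def FibPaths_0)

lemma Cv_1: "Cv (Suc 0) = {}"
  by (auto simp: Cv_def FibPaths_1)

lemma Cv_SS: "Cv (Suc (Suc n)) =
   (\<lambda>(a, b). (H # a, H # b)) ` Cv (Suc n) \<union> (\<lambda>(a, b). (U # D # a, U # D # b)) ` Cv n
   \<union> (\<lambda>p. (H # H # p, U # D # p)) ` FibPaths n" (is "?L = ?A \<union> ?B \<union> ?C")
proof
  show "?L \<subseteq> ?A \<union> ?B \<union> ?C"
  proof
    fix x assume x: "x \<in> ?L"
    obtain a b where ab: "x = (a, b)" by (cases x)
    have a: "a \<in> FibPaths (Suc (Suc n))" and b: "b \<in> FibPaths (Suc (Suc n))"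
      and bel: "below a b" and ne: "a \<noteq> b"
      and nc: "\<And>c. c \<in> FibPaths (Suc (Suc n)) \<Longrightarrow> below a c \<Longrightarrow> below c b \<Longrightarrow> c \<noteq> a \<Longrightarrow> c \<noteq> b \<Longrightarrow> False"
      using x unfolding ab Cv_def by auto
    from a consider (aH) a' where "a = H # a'" "a' \<in> FibPaths (Suc n)"
      | (aU) a' where "a = U # D # a'" "a' \<in> FibPaths n"
      by (auto simp: FibPaths_SS)
    then show "x \<in> ?A \<union> ?B \<union> ?C"
    proof cases
      case aH
      from b consider (bH) b' where "b = H # b'" "b' \<in> FibPaths (Suc n)"
        | (bU) b' where "b = U # D # b'" "b' \<in> FibPaths n"
        by (auto simp: FibPaths_SS)
      then show ?thesis
      proof cases
        case bH
        have "(a', b') \<in> Cv (Suc n)"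
          unfolding Cv_iff
        proof (intro conjI ballI impI)
          show "a' \<in> FibPaths (Suc n)" "b' \<in> FibPaths (Suc n)" by fact+
          show "below a' b'" using bel aH bH by (simp add: below_same)
          show "a' \<noteq> b'" using ne aH bH by simp
          fix c assume "c \<in> FibPaths (Suc n)" "below a' c" "below c b'" "c \<noteq> a'" "c \<noteq> b'"
          then show False using nc[of "H # c"] aH bH by (auto simp: FibPaths_SS below_same)
        qed
        moreover have "x = (\<lambda>(a, b). (H # a, H # b)) (a', b')" using ab aH bH by simp
        ultimately show ?thesis by blast
      next
        case bU
        from FibPaths_Suc_cases[OF aH(2)] obtain a'' where a'': "a' = H # a''" "a'' \<in> FibPaths n"
          using bel aH bU below_HU_UD by blast
        have "a'' = b'"
        proof (rule ccontr)
          assume "a'' \<noteq> b'"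
          moreover have "below a (U # D # a'')" using aH a'' by (simp add: below_HH_UD below_refl)
          moreover have "below (U # D # a'') b" using bel aH a'' bU by (simp add: below_HH_UD below_same)
          ultimately show False using nc[of "U # D # a''"] aH a'' bU by (auto simp: FibPaths_SS)
        qed
        then have "x = (\<lambda>p. (H # H # p, U # D # p)) a''" using ab aH bU a'' by simp
        then show ?thesis using a'' by blast
      qed
    next
      case aU
      from b consider (bH) b' where "b = H # b'" "b' \<in> FibPaths (Suc n)"
        | (bU) b' where "b = U # D # b'" "b' \<in> FibPaths n"
        by (auto simp: FibPaths_SS)
      then show ?thesis
      proof cases
        case bH then show ?thesis using bel aU below_U_H by simp
      next
        case bU
        have "(a', b') \<in> Cv n"
          unfolding Cv_iff
        proof (intro conjI ballI impI)
          show "a' \<in> FibPaths n" "b' \<in> FibPaths n" by fact+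
          show "below a' b'" using bel aU bU by (simp add: below_same)
          show "a' \<noteq> b'" using ne aU bU by simp
          fix c assume "c \<in> FibPaths n" "below a' c" "below c b'" "c \<noteq> a'" "c \<noteq> b'"
          then show False using nc[of "U # D # c"] aU bU by (auto simp: FibPaths_SS below_same)
        qed
        moreover have "x = (\<lambda>(a, b). (U # D # a, U # D # b)) (a', b')" using ab aU bU by simp
        ultimately show ?thesis by blast
      qed
    qed
  qed
next
  show "?A \<union> ?B \<union> ?C \<subseteq> ?L"
  proof (intro Un_least subsetI)
    fix x assume "x \<in> ?A"
    then obtain a b where x: "x = (H # a, H # b)" and ab: "(a, b) \<in> Cv (Suc n)" by auto
    from ab have a: "a \<in> FibPaths (Suc n)" and b: "b \<in> FibPaths (Suc n)"
      and bel: "below a b" and ne: "a \<noteq> b"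
      and nc: "\<And>c. c \<in> FibPaths (Suc n) \<Longrightarrow> below a c \<Longrightarrow> below c b \<Longrightarrow> c \<noteq> a \<Longrightarrow> c \<noteq> b \<Longrightarrow> False"
      unfolding Cv_def by auto
    show "x \<in> ?L" unfolding x Cv_iff
    proof (intro conjI ballI impI)
      show "H # a \<in> FibPaths (Suc (Suc n))" "H # b \<in> FibPaths (Suc (Suc n))"
        using a b by (auto simp: FibPaths_SS)
      show "below (H # a) (H # b)" "H # a \<noteq> H # b" using bel ne by (auto simp: below_same)
      fix c assume c: "c \<in> FibPaths (Suc (Suc n))" "below (H # a) c" "below c (H # b)"
        "c \<noteq> H # a" "c \<noteq> H # b"
      from c(1) consider (cH) c' where "c = H # c'" "c' \<in> FibPaths (Suc n)"
        | (cU) c' where "c = U # D # c'" "c' \<in> FibPaths n"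
        by (auto simp: FibPaths_SS)
      then show False
      proof cases
        case cH then show False using nc[of c'] c by (auto simp: below_same)
      next
        case cU then show False using c below_U_H by auto
      qed
    qed
  next
    fix x assume "x \<in> ?B"
    then obtain a b where x: "x = (U # D # a, U # D # b)" and ab: "(a, b) \<in> Cv n" by auto
    from ab have a: "a \<in> FibPaths n" and b: "b \<in> FibPaths n"
      and bel: "below a b" and ne: "a \<noteq> b"
      and nc: "\<And>c. c \<in> FibPaths n \<Longrightarrow> below a c \<Longrightarrow> below c b \<Longrightarrow> c \<noteq> a \<Longrightarrow> c \<noteq> b \<Longrightarrow> False"
      unfolding Cv_def by auto
    show "x \<in> ?L" unfolding x Cv_iff
    proof (intro conjI ballI impI)
      show "U # D # a \<in> FibPaths (Suc (Suc n))" "U # D # b \<in> FibPaths (Suc (Suc n))"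
        using a b by (auto simp: FibPaths_SS)
      show "below (U # D # a) (U # D # b)" "U # D # a \<noteq> U # D # b" using bel ne by (auto simp: below_same)
      fix c assume c: "c \<in> FibPaths (Suc (Suc n))" "below (U # D # a) c" "below c (U # D # b)"
        "c \<noteq> U # D # a" "c \<noteq> U # D # b"
      from c(1) consider (cH) c' where "c = H # c'" "c' \<in> FibPaths (Suc n)"
        | (cU) c' where "c = U # D # c'" "c' \<in> FibPaths n"
        by (auto simp: FibPaths_SS)
      then show False
      proof cases
        case cH then show False using c below_U_H by auto
      next
        case cU then show False using nc[of c'] c by (auto simp: below_same)
      qed
    qed
  next
    fix x assume "x \<in> ?C"
    then obtain p where x: "x = (H # H # p, U # D # p)" and p: "p \<in> FibPaths n" by auto
    show "x \<in> ?L" unfolding x Cv_iff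
    proof (intro conjI ballI impI)
      show "H # H # p \<in> FibPaths (Suc (Suc n))" "U # D # p \<in> FibPaths (Suc (Suc n))"
        using p by (auto intro: H_in_FP UD_in_FP)
      show "below (H # H # p) (U # D # p)" by (simp add: below_HH_UD below_refl)
      show "H # H # p \<noteq> U # D # p" by simp
      fix c assume c: "c \<in> FibPaths (Suc (Suc n))" "below (H # H # p) c" "below c (U # D # p)"
        "c \<noteq> H # H # p" "c \<noteq> U # D # p"
      from c(1) consider (cH) c' where "c = H # c'" "c' \<in> FibPaths (Suc n)"
        | (cU) c' where "c = U # D # c'" "c' \<in> FibPaths n"
        by (auto simp: FibPaths_SS)
      then show False
      proof cases
        case cH
        from FibPaths_Suc_cases[OF cH(2)] show False
        proof
          assume "\<exists>q\<in>FibPaths n. c' = H # q"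
          then obtain q where q: "q \<in> FibPaths n" "c' = H # q" by auto
          have "below p q" using c(2) cH q by (simp add: below_same)
          moreover have "below q p" using c(3) cH q by (simp add: below_HH_UD)
          ultimately have "p = q" using below_antisym len_FP p q by metis
          then show False using c cH q by simp
        next
          assume "\<exists>m q. n = Suc m \<and> q \<in> FibPaths m \<and> c' = U # D # q"
          then show False using c(3) cH below_HU_UD by auto
        qed
      next
        case cU
        have "below p c'" using c(2) cU by (simp add: below_HH_UD)
        moreover have "below c' p" using c(3) cU by (simp add: below_same)
        ultimately have "p = c'" using below_antisym len_FP p cU by metis
        then show False using c cU by simp
      qed
    qed
  qed
qed


lemma finite_Cv: "finite (Cv n)"
proof -
  have "Cv n \<subseteq> FibPaths n \<times> FibPaths n" by (auto simp: Cv_def)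
  then show ?thesis using finite_FibPaths by (meson finite_SigmaI finite_subset)
qed

lemma ell_rec: "ell (Suc (Suc n)) = ell (Suc n) + ell n + fib (Suc n)"
proof -
  let ?A = "(\<lambda>(a, b). (H # a, H # b)) ` Cv (Suc n)"
  let ?B = "(\<lambda>(a, b). (U # D # a, U # D # b)) ` Cv n"
  let ?C = "(\<lambda>p. (H # H # p, U # D # p)) ` FibPaths n"
  have iA: "inj_on (\<lambda>(a, b). (H # a, H # b)) (Cv (Suc n))" by (auto simp: inj_on_def)
  have iB: "inj_on (\<lambda>(a, b). (U # D # a, U # D # b)) (Cv n)" by (auto simp: inj_on_def)
  have iC: "inj_on (\<lambda>p. (H # H # p, U # D # p)) (FibPaths n)" by (auto simp: inj_on_def)
  have fA: "finite ?A" "finite ?B" "finite ?C" using finite_Cv finite_FibPaths by auto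
  have "card (?A \<union> ?B \<union> ?C) = card (?A \<union> ?B) + card ?C"
    by (rule card_Un_disjoint) (use fA in auto)
  also have "card (?A \<union> ?B) = card ?A + card ?B"
    by (rule card_Un_disjoint) (use fA in auto)
  also have "card ?A = ell (Suc n)" using iA by (simp add: card_image ell_Cv)
  also have "card ?B = ell n" using iB by (simp add: card_image ell_Cv)
  also have "card ?C = fib (Suc n)" using iC card_FibPaths by (simp add: card_image)
  finally show ?thesis by (simp add: ell_Cv Cv_SS)
qed

lemma ell_0: "ell 0 = 0" by (simp add: ell_Cv Cv_0)
lemma ell_1: "ell (Suc 0) = 0" by (simp add: ell_Cv Cv_1)

lemma lucas_fib: "lucas (Suc n) + 2 * lucas n = 5 * fib (Suc n)"
  by (induction n rule: fib.induct) auto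

lemma ell_closed: "5 * real (ell n) = real n * real (lucas n) - real (fib n)"
proof (induction n rule: fib.induct)
  case (3 n)
  have l: "real (lucas (Suc n)) + 2 * real (lucas n) = 5 * real (fib (Suc n))"
    using lucas_fib[of n] by (metis of_nat_add of_nat_mult of_nat_numeral)
  show ?case using 3 l by (simp add: ell_rec algebra_simps)
qed (auto simp: ell_0 ell_1)

lemma fps_fib: "Abs_fps (\<lambda>n. real (fib n)) * (1 - fps_X - fps_X ^ 2) = fps_X"
proof -
  let ?F = "Abs_fps (\<lambda>n. real (fib n))"
  have e: "?F * (1 - fps_X - fps_X ^ 2) = ?F - fps_X * ?F - fps_X ^ 2 * ?F"
    by (simp add: algebra_simps)
  show ?thesis unfolding e
  proof (rule fps_ext)
    fix n show "fps_nth (?F - fps_X * ?F - fps_X ^ 2 * ?F) n = fps_nth fps_X n"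
      by (cases n rule: fib.cases) (auto simp: fps_X_power_mult_nth fps_X_nth)
  qed
qed

lemma fps_ell: "Abs_fps (\<lambda>n. real (ell n)) * (1 - fps_X - fps_X ^ 2) = fps_X * Abs_fps (\<lambda>n. real (fib n))"
proof -
  let ?F = "Abs_fps (\<lambda>n. real (ell n))"
  have e: "?F * (1 - fps_X - fps_X ^ 2) = ?F - fps_X * ?F - fps_X ^ 2 * ?F"
    by (simp add: algebra_simps)
  show ?thesis unfolding e
  proof (rule fps_ext)
    fix n show "fps_nth (?F - fps_X * ?F - fps_X ^ 2 * ?F) n = fps_nth (fps_X * Abs_fps (\<lambda>n. real (fib n))) n"
      by (cases n rule: fib.cases) (auto simp: fps_X_power_mult_nth ell_rec ell_0 ell_1)
  qed
qed

lemma fps_part: "Abs_fps (\<lambda>n. real (ell n)) = fps_X ^ 2 / (1 - fps_X - fps_X ^ 2) ^ 2"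
proof -
  let ?E = "Abs_fps (\<lambda>n. real (ell n))" and ?B = "1 - fps_X - fps_X ^ 2 :: real fps"
  have "fps_nth ?B 0 = 1" by (simp only: fps_sub_nth fps_one_nth fps_X_nth fps_X_power_nth) simp
  then have "?B \<noteq> 0" by (metis fps_zero_nth zero_neq_one)
  then have B2: "?B ^ 2 \<noteq> 0" by simp
  have "?E * ?B ^ 2 = (?E * ?B) * ?B" by (simp add: power2_eq_square algebra_simps)
  also have "\<dots> = fps_X * (Abs_fps (\<lambda>n. real (fib n)) * ?B)" by (simp only: fps_ell mult.assoc)
  also have "\<dots> = fps_X ^ 2" by (simp only: fps_fib) (simp add: power2_eq_square)
  finally have "fps_X ^ 2 / ?B ^ 2 = ?E * ?B ^ 2 / ?B ^ 2" by simp
  also have "\<dots> = ?E" using B2 by (rule nonzero_mult_div_cancel_right)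
  finally show ?thesis by simp
qed


lemma alg1:
  fixes a b m s :: real
  assumes "a > 0" "m > 0" "s > 0"
  shows "1 + b / a - (1 - b / a) * (1 / s) * inverse m = ((m * (a + b) - (a - b) / s) / 5) / (m / 5 * a)"
  using assms by (simp add: field_simps)
lemma alg2:
  fixes a p m s :: real
  assumes "a > 0" "p > 0" "s > 0" "s * s = 5"
  shows "(m / 5 * a) / (p * a / s) = m / (s * p)"
proof -
  have "(m / 5 * a) / (p * a / s) = m * s / (5 * p)" using assms by (simp add: field_simps)
  also have "\<dots> = m * s / (s * s * p)" using assms by simp
  also have "\<dots> = m / (s * p)" using assms by (simp add: field_simps)
  finally show ?thesis .
qed

definition psi :: real where "psi = (1 - sqrt 5) / 2"

lemma phi_pos: "phi > 1" by (simp add: phi_def)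

lemma phi_sq: "phi ^ 2 = phi + 1"
  by (simp add: phi_def field_simps power2_eq_square)

lemma psi_sq: "psi ^ 2 = psi + 1"
  by (simp add: psi_def field_simps power2_eq_square)

lemma lucas_binet: "real (lucas n) = phi ^ n + psi ^ n"
proof (induction n rule: fib.induct)
  case (3 n)
  have "real (lucas (Suc (Suc n))) = real (lucas (Suc n)) + real (lucas n)" by simp
  also have "\<dots> = phi ^ n * (phi + 1) + psi ^ n * (psi + 1)" using 3 by (simp add: algebra_simps)
  also have "\<dots> = phi ^ Suc (Suc n) + psi ^ Suc (Suc n)"
    by (simp add: phi_sq[symmetric] psi_sq[symmetric] power2_eq_square)
  finally show ?case .
qed (auto simp: phi_def psi_def field_simps)

lemma fib_binet: "real (fib n) = (phi ^ n - psi ^ n) / sqrt 5"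
  unfolding phi_def psi_def by (rule fib_closed_form)

lemma ratio_lim: "(\<lambda>n. psi / phi) \<longlonglongrightarrow> psi / phi" by simp

lemma r_lim: "(\<lambda>n. (psi / phi) ^ n) \<longlonglongrightarrow> 0"
proof (rule LIMSEQ_power_zero)
  have "\<bar>psi\<bar> < phi" by (simp add: psi_def phi_def abs_if field_simps)
  then show "norm (psi / phi) < 1" using phi_pos by (simp add: abs_divide)
qed

lemma ell_asymp: "(\<lambda>n. real (ell n)) \<sim>[at_top] (\<lambda>n. real n / 5 * phi ^ n)"
proof (rule asymp_equivI')
  let ?r = "psi / phi"
  have lim: "(\<lambda>n. 1 + ?r ^ n - (1 - ?r ^ n) * (1 / sqrt 5) * inverse (real n)) \<longlonglongrightarrow>
      1 + 0 - (1 - 0) * (1 / sqrt 5) * 0"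
    by (intro tendsto_intros r_lim lim_inverse_n)
  have ev: "eventually (\<lambda>n. 1 + ?r ^ n - (1 - ?r ^ n) * (1 / sqrt 5) * inverse (real n)
      = real (ell n) / (real n / 5 * phi ^ n)) at_top"
  proof (rule eventually_at_top_linorderI[of 1])
    fix n :: nat assume n: "n \<ge> 1"
    have e: "real (ell n) = (real n * (phi ^ n + psi ^ n) - (phi ^ n - psi ^ n) / sqrt 5) / 5"
      using ell_closed[of n] by (simp add: lucas_binet fib_binet)
    have "phi ^ n > 0" using phi_pos by simp
    then show "1 + ?r ^ n - (1 - ?r ^ n) * (1 / sqrt 5) * inverse (real n)
      = real (ell n) / (real n / 5 * phi ^ n)"
      using n unfolding e power_divide by (intro alg1) auto
  qed
  show "((\<lambda>n. real (ell n) / (real n / 5 * phi ^ n)) \<longlongrightarrow> 1) at_top"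
    using Lim_transform_eventually[OF lim ev] by simp
qed

lemma fib_asymp: "(\<lambda>n. real (fib (Suc n))) \<sim>[at_top] (\<lambda>n. phi ^ Suc n / sqrt 5)"
proof (rule asymp_equivI')
  have "(\<lambda>n. real (fib n) / (phi ^ n / sqrt 5)) \<longlonglongrightarrow> 1"
    unfolding phi_def by (rule fib_asymptotics)
  then show "((\<lambda>n. real (fib (Suc n)) / (phi ^ Suc n / sqrt 5)) \<longlongrightarrow> 1) at_top"
    by (rule LIMSEQ_Suc)
qed

lemma iota_asymp: "iota \<sim>[at_top] (\<lambda>n. real n / (sqrt 5 * phi))"
proof -
  have "(\<lambda>n. real (ell n) / real (fib (Suc n))) \<sim>[at_top]
        (\<lambda>n. (real n / 5 * phi ^ n) / (phi ^ Suc n / sqrt 5))"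
    by (intro asymp_equiv_divide ell_asymp fib_asymp)
  moreover have eq: "\<And>n. (real n / 5 * phi ^ n) / (phi ^ Suc n / sqrt 5) = real n / (sqrt 5 * phi)"
  proof -
    fix n
    have s: "sqrt 5 * sqrt 5 = (5::real)" by simp
    have "phi ^ n > 0" "phi > 0" using phi_pos by auto
    then show "(real n / 5 * phi ^ n) / (phi ^ Suc n / sqrt 5) = real n / (sqrt 5 * phi)"
      unfolding power_Suc using s by (intro alg2) auto
  qed
  moreover have "iota = (\<lambda>n. real (ell n) / real (fib (Suc n)))"
    using card_FibPaths by (simp add: iota_def fun_eq_iff)
  moreover have "(\<lambda>n. (real n / 5 * phi ^ n) / (phi ^ Suc n / sqrt 5)) = (\<lambda>n. real n / (sqrt 5 * phi))"
    by (rule ext) (rule eq)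
  ultimately show ?thesis by simp
qed

theorem mainTheorem16:
  shows "Abs_fps (\<lambda>n. real (ell n)) = fps_X ^ 2 / (1 - fps_X - fps_X ^ 2) ^ 2
    \<and> (\<forall>n. real (ell n) = (real n * real (lucas n) - real (fib n)) / 5)
    \<and> ((\<lambda>n. real (ell n)) \<sim>[at_top] (\<lambda>n. real n / 5 * phi ^ n))
    \<and> (iota \<sim>[at_top] (\<lambda>n. real n / (sqrt 5 * phi)))"
proof (intro conjI allI)
  fix n show "real (ell n) = (real n * real (lucas n) - real (fib n)) / 5"
    using ell_closed[of n] by simp
qed (rule fps_part ell_asymp iota_asymp)+

end
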